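(* Let $n=36$ and let $\mathcal{D}_{S_1},\mathcal{D}_{S_2}\subseteq\mathcal{D}_{[36]}\setminus\{36\}$ with $12\in\mathcal{D}_{S_1}\cap\mathcal{D}_{S_2}$. If $\mathrm{Spec}(\mathrm{ICG}(36,\mathcal{D}_{S_1}))=\mathrm{Spec}(\mathrm{ICG}(36,\mathcal{D}_{S_2}))$, then $\mathcal{D}_{S_1}=\mathcal{D}_{S_2}$.
   Context: Identify $\mathbb{Z}_n$ with $[n]=\{1,\dots,n\}$. For a divisor $d$ of $n$, $G_n(d)=\{j\in[n]:\gcd(j,n)=d\}$; $\mathcal{D}_{[n]}$ is the set of positive divisors of $n$. For $\mathcal{D}\subseteq\mathcal{D}_{[n]}\setminus\{n\}$, $\mathrm{ICG}(n,\mathcal{D})=\mathrm{Cay}(\mathbb{Z}_n,S)$ with $S=\bigcup_{d\in\mathcal{D}}G_n(d)$, and $\mathcal{D}=\mathcal{D}_S$. $\mathrm{Spec}$ is the multiset of adjacency eigenvalues. *)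

theory Defs
  imports "Jordan_Normal_Form.Char_Poly" "HOL-Computational_Algebra.Fundamental_Theorem_Algebra"
begin

text \<open>Z_n is identified with [n] = {1..n}; n represents the residue 0.\<close>

definition Gn :: "nat \<Rightarrow> nat \<Rightarrow> nat set" where
  "Gn n d = {j \<in> {1..n}. gcd j n = d}"

definition divisors_of :: "nat \<Rightarrow> nat set" where
  "divisors_of n = {d. 0 < d \<and> d dvd n}"

definition conn_set :: "nat \<Rightarrow> nat set \<Rightarrow> nat set" where
  "conn_set n D = (\<Union>d\<in>D. Gn n d)"

text \<open>Adjacency matrix of Cay(Z_n, S): row/column index i (0 \<le> i < n) stands for the
  vertex i+1 of [n]; vertices u, v are adjacent iff v - u is congruent mod n to an element of S.\<close>
definition cayley_adj :: "nat \<Rightarrow> nat set \<Rightarrow> complex mat" where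
  "cayley_adj n S = mat n n (\<lambda>(i, j).
      if (\<exists>s\<in>S. (int j - int i) mod int n = int s mod int n) then 1 else 0)"

definition ICG_adj :: "nat \<Rightarrow> nat set \<Rightarrow> complex mat" where
  "ICG_adj n D = cayley_adj n (conn_set n D)"

definition Spec :: "complex mat \<Rightarrow> complex multiset" where
  "Spec A = proots (char_poly A)"

end

theory Submission
  imports Defs
begin

definition om :: "nat \<Rightarrow> complex" where "om n = cis (2 * pi / n)"

lemma om_pow_n: "n > 0 \<Longrightarrow> om n ^ n = 1"
  unfolding om_def by (simp add: DeMoivre)

lemma om_pow_mod: "n > 0 \<Longrightarrow> om n ^ (a mod n) = om n ^ a"
proof -
  assume n: "n > 0"
  have "om n ^ a = om n ^ (n * (a div n) + a mod n)" by simp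
  also have "\<dots> = (om n ^ n) ^ (a div n) * om n ^ (a mod n)" by (simp only: power_add power_mult)
  finally show ?thesis using om_pow_n[OF n] by simp
qed

lemma om_pow_eq_1: assumes n: "n > 0" shows "om n ^ a = 1 \<longleftrightarrow> n dvd a"
proof
  assume "n dvd a" then show "om n ^ a = 1" using om_pow_mod[OF n, of a] by simp
next
  assume h: "om n ^ a = 1"
  have "om n ^ a = cis (2 * pi * real a / real n)" unfolding om_def by (simp add: DeMoivre algebra_simps)
  with h have "cis (2 * pi * real a / real n) = 1" by simp
  hence "cos (2 * pi * real a / real n) = 1" by (metis cis.sel(1) one_complex.sel(1))
  then obtain k :: int where k: "2 * pi * real a / real n = real_of_int k * 2 * pi"
    using cos_one_2pi_int by blast
  hence "real a = real n * k" using n by (simp add: field_simps)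
  hence "int a = int n * k" by (metis of_int_eq_iff of_int_mult of_int_of_nat_eq)
  thus "n dvd a" by (metis dvd_triv_left int_dvd_int_iff)
qed

lemma orth: assumes n: "n > 0"
  shows "(\<Sum>k<n. om n ^ (t * k)) = (if n dvd t then of_nat n else 0)"
proof (cases "n dvd t")
  case True
  then have "\<And>k. om n ^ (t * k) = 1" using om_pow_eq_1[OF n] by auto
  then show ?thesis using True by simp
next
  case False
  let ?z = "om n ^ t"
  have z1: "?z \<noteq> 1" using False om_pow_eq_1[OF n] by auto
  have zn: "?z ^ n = 1" using om_pow_n[OF n] by (metis power_mult mult.commute one_power2 power_one)
  have "(\<Sum>k<n. om n ^ (t * k)) = (\<Sum>k<n. ?z ^ k)" by (simp add: power_mult)
  also have "\<dots> = 0" using z1 zn by (simp add: sum_gp_strict)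
  finally show ?thesis using False by simp
qed

lemma reidx: fixes n j :: nat assumes j: "j \<le> n" and n: "n > 0"
  shows "(\<Sum>t<n. f ((t + n - j) mod n) t) = (\<Sum>l<n. f l ((l + j) mod n))"
proof (rule sum.reindex_bij_witness[of _ "\<lambda>l. (l+j) mod n" "\<lambda>t. (t+n-j) mod n"])
  fix t assume t: "t \<in> {..<n}"
  have "((t + n - j) mod n + j) mod n = (t + n - j + j) mod n" by (rule mod_add_left_eq)
  also have "\<dots> = t" using t j by simp
  finally show "((t + n - j) mod n + j) mod n = t" .
  show "(t + n - j) mod n \<in> {..<n}" using n by simp
  show "f ((t + n - j) mod n) (((t + n - j) mod n + j) mod n) = f ((t + n - j) mod n) t"
    using \<open>((t + n - j) mod n + j) mod n = t\<close> by simp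
next
  fix l assume l: "l \<in> {..<n}"
  have "((l + j) mod n + n - j) mod n = ((l + j) mod n + (n - j)) mod n" using j by simp
  also have "\<dots> = (l + j + (n - j)) mod n" by (rule mod_add_left_eq)
  also have "\<dots> = l" using l j by simp
  finally show "((l + j) mod n + n - j) mod n = l" .
  show "(l + j) mod n \<in> {..<n}" using n by simp
qed

definition T :: "nat \<Rightarrow> (nat \<Rightarrow> complex) \<Rightarrow> nat \<Rightarrow> complex" where
  "T n x k = (\<Sum>j<n. x j * om n ^ (j * k))"

definition conv :: "nat \<Rightarrow> (nat \<Rightarrow> 'a::comm_semiring_0) \<Rightarrow> (nat \<Rightarrow> 'a) \<Rightarrow> nat \<Rightarrow> 'a" where
  "conv n x y t = (\<Sum>j<n. x j * y ((t + n - j) mod n))"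

lemma T_mult: assumes n: "n > 0" shows "T n x k * T n y k = T n (conv n x y) k"
proof -
  have "T n x k * T n y k = (\<Sum>j<n. \<Sum>l<n. x j * (y l * om n ^ ((l + j) * k)))"
    unfolding T_def by (simp add: sum_product power_add algebra_simps)
  also have "\<dots> = (\<Sum>j<n. x j * (\<Sum>t<n. y ((t + n - j) mod n) * om n ^ (t * k)))"
  proof (rule sum.cong[OF refl])
    fix j assume j: "j \<in> {..<n}"
    have "(\<Sum>t<n. y ((t + n - j) mod n) * om n ^ (t * k)) = (\<Sum>l<n. y l * om n ^ (((l + j) mod n) * k))"
      using reidx[of j n "\<lambda>a b. y a * om n ^ (b * k)"] j n by simp
    also have "\<dots> = (\<Sum>l<n. y l * om n ^ ((l + j) * k))"
      by (simp add: power_mult om_pow_mod[OF n])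
    finally show "(\<Sum>l<n. x j * (y l * om n ^ ((l + j) * k))) = x j * (\<Sum>t<n. y ((t + n - j) mod n) * om n ^ (t * k))"
      by (simp add: sum_distrib_left)
  qed
  also have "\<dots> = T n (conv n x y) k"
    unfolding T_def conv_def sum_distrib_left sum_distrib_right
    by (subst sum.swap) (simp add: mult.assoc)
  finally show ?thesis .
qed

lemma T_sum: assumes n: "n > 0" shows "(\<Sum>k<n. T n x k) = of_nat n * x 0"
proof -
  have "(\<Sum>k<n. T n x k) = (\<Sum>j<n. x j * (\<Sum>k<n. om n ^ (j * k)))"
    unfolding T_def sum_distrib_left by (subst sum.swap) simp
  also have "\<dots> = (\<Sum>j<n. (if j = 0 then x j * of_nat n else 0))"
    by (rule sum.cong[OF refl]) (auto simp: orth[OF n] dest: dvd_imp_le)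
  also have "\<dots> = of_nat n * x 0" using n by (simp add: sum.delta)
  finally show ?thesis .
qed

definition aS :: "nat \<Rightarrow> nat set \<Rightarrow> nat \<Rightarrow> complex" where
  "aS n S j = (if \<exists>s\<in>S. int j mod int n = int s mod int n then 1 else 0)"

definition lam :: "nat \<Rightarrow> nat set \<Rightarrow> nat \<Rightarrow> complex" where
  "lam n S k = T n (aS n S) k"

definition FF :: "nat \<Rightarrow> complex mat" where "FF n = mat n n (\<lambda>(i,j). om n ^ (i * j))"
definition GG :: "nat \<Rightarrow> complex mat" where "GG n = mat n n (\<lambda>(i,j). om n ^ (i * j * (n - 1)) / of_nat n)"
definition DD :: "nat \<Rightarrow> nat set \<Rightarrow> complex mat" where
  "DD n S = mat n n (\<lambda>(i,j). if i = j then lam n S i else 0)"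

lemma dvd_shift: fixes n i k :: nat assumes "i < n" "k < n"
  shows "n dvd (i + k * (n - 1)) \<longleftrightarrow> i = k"
proof -
  obtain m where m: "n = Suc m" using assms by (cases n) auto
  have e: "int (i + k * (n - 1)) = (int i - int k) + int n * int k" unfolding m by (simp add: algebra_simps)
  have "n dvd (i + k * (n - 1)) \<longleftrightarrow> int n dvd (int i - int k)"
    by (metis e int_dvd_int_iff dvd_add_left_iff dvd_triv_left)
  also have "\<dots> \<longleftrightarrow> i = k"
  proof
    assume "int n dvd (int i - int k)"
    then obtain c where c: "int i - int k = int n * c" by (auto simp: dvd_def)
    have "c = 0"
    proof (rule ccontr)
      assume "c \<noteq> 0"
      hence "\<bar>c\<bar> \<ge> 1" by linarith
      hence "int n * 1 \<le> int n * \<bar>c\<bar>" by (intro mult_left_mono) auto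
      hence "\<bar>int n * c\<bar> \<ge> int n" by (simp add: abs_mult)
      with c assms show False by linarith
    qed
    with c show "i = k" by simp
  qed simp
  finally show ?thesis .
qed

lemma dvd_shift': fixes n i k :: nat assumes "i < n" "k < n"
  shows "n dvd (i + k * (n - Suc 0)) \<longleftrightarrow> i = k"
  using dvd_shift[OF assms] by simp

lemma FG: assumes n: "n > 0" shows "FF n * GG n = 1\<^sub>m n"
proof (rule eq_matI)
  fix i k assume i: "i < dim_row (1\<^sub>m n :: complex mat)" and k: "k < dim_col (1\<^sub>m n :: complex mat)"
  hence i: "i < n" and k: "k < n" by auto
  have "(FF n * GG n) $$ (i, k) = (\<Sum>j<n. om n ^ (i * j) * (om n ^ (j * k * (n - 1)) / of_nat n))"
    using i k unfolding FF_def GG_def by (simp add: scalar_prod_def atLeast0LessThan)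
  also have "\<dots> = (\<Sum>j<n. om n ^ ((i + k * (n - 1)) * j)) / of_nat n"
    unfolding sum_divide_distrib
    by (rule sum.cong[OF refl]) (simp add: power_add[symmetric] add_mult_distrib add_mult_distrib2 ac_simps)
  also have "\<dots> = (1\<^sub>m n :: complex mat) $$ (i, k)"
    using i k n by (simp add: orth[OF n] mult.commute[of _ j] dvd_shift')
  finally show "(FF n * GG n) $$ (i, k) = (1\<^sub>m n :: complex mat) $$ (i, k)" .
qed (auto simp: FF_def GG_def)

lemma GF: assumes n: "n > 0" shows "GG n * FF n = 1\<^sub>m n"
proof (rule eq_matI)
  fix i k assume i: "i < dim_row (1\<^sub>m n :: complex mat)" and k: "k < dim_col (1\<^sub>m n :: complex mat)"
  hence i: "i < n" and k: "k < n" by auto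
  have "(GG n * FF n) $$ (i, k) = (\<Sum>j<n. (om n ^ (i * j * (n - 1)) / of_nat n) * om n ^ (j * k))"
    using i k unfolding FF_def GG_def by (simp add: scalar_prod_def atLeast0LessThan)
  also have "\<dots> = (\<Sum>j<n. om n ^ ((k + i * (n - 1)) * j)) / of_nat n"
    unfolding sum_divide_distrib
    by (rule sum.cong[OF refl]) (simp add: power_add[symmetric] add_mult_distrib add_mult_distrib2 ac_simps)
  also have "\<dots> = (1\<^sub>m n :: complex mat) $$ (i, k)"
    using i k n by (auto simp add: orth[OF n] dvd_shift')
  finally show "(GG n * FF n) $$ (i, k) = (1\<^sub>m n :: complex mat) $$ (i, k)" .
qed (auto simp: FF_def GG_def)

lemma adj_entry: assumes "i < n" "j < n"
  shows "cayley_adj n S $$ (i, j) = aS n S ((j + n - i) mod n)"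
proof -
  have "int ((j + n - i) mod n) mod int n = (int j - int i) mod int n"
  proof -
    have "int ((j + n - i) mod n) = int (j + n - i) mod int n" by (simp add: zmod_int)
    also have "int (j + n - i) = (int j - int i) + int n" using assms by simp
    finally show ?thesis by simp
  qed
  thus ?thesis using assms unfolding cayley_adj_def aS_def by simp
qed

lemma adj_dims[simp]: "dim_row (cayley_adj n S) = n" "dim_col (cayley_adj n S) = n"
  "cayley_adj n S \<in> carrier_mat n n"
  by (auto simp: cayley_adj_def)

lemma om_mod_mult: "n > 0 \<Longrightarrow> om n ^ ((a mod n) * k) = om n ^ (a * k)"
  by (simp add: power_mult om_pow_mod)

lemma AF: assumes n: "n > 0" shows "cayley_adj n S * FF n = FF n * DD n S"
proof (rule eq_matI)
  fix i k assume i: "i < dim_row (FF n * DD n S)" and k: "k < dim_col (FF n * DD n S)"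
  hence i: "i < n" and k: "k < n" by (auto simp: FF_def DD_def)
  have "(cayley_adj n S * FF n) $$ (i, k) = (\<Sum>j<n. aS n S ((j + n - i) mod n) * om n ^ (j * k))"
  proof -
    have "(cayley_adj n S * FF n) $$ (i, k) = (\<Sum>j<n. cayley_adj n S $$ (i, j) * FF n $$ (j, k))"
      using i k by (simp add: scalar_prod_def atLeast0LessThan FF_def)
    also have "\<dots> = (\<Sum>j<n. aS n S ((j + n - i) mod n) * om n ^ (j * k))"
      using i k by (intro sum.cong refl) (simp add: adj_entry FF_def)
    finally show ?thesis .
  qed
  also have "\<dots> = (\<Sum>l<n. aS n S l * om n ^ (((l + i) mod n) * k))"
    using reidx[of i n "\<lambda>a b. aS n S a * om n ^ (b * k)"] i n by simp
  also have "\<dots> = (\<Sum>l<n. om n ^ (i * k) * (aS n S l * om n ^ (l * k)))"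
    by (rule sum.cong[OF refl]) (subst om_mod_mult[OF n], simp add: power_add[symmetric] add_mult_distrib add_mult_distrib2 ac_simps)
  also have "\<dots> = om n ^ (i * k) * lam n S k"
    unfolding lam_def T_def by (simp add: sum_distrib_left)
  also have "\<dots> = (FF n * DD n S) $$ (i, k)"
    using i k unfolding FF_def DD_def
    by (simp add: scalar_prod_def atLeast0LessThan sum.delta' if_distrib cong: if_cong)
  finally show "(cayley_adj n S * FF n) $$ (i, k) = (FF n * DD n S) $$ (i, k)" .
qed (auto simp: FF_def DD_def cayley_adj_def)

lemma sum_list_single: "sum_list (map (\<lambda>x. {#x#}) xs) = mset xs"
  by (induction xs) (auto simp: add.commute)

lemma Spec_cayley: assumes n: "n > 0"
  shows "Spec (cayley_adj n S) = mset (map (lam n S) [0..<n])"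
proof -
  let ?A = "cayley_adj n S"
  have carr: "FF n \<in> carrier_mat n n" "GG n \<in> carrier_mat n n" "DD n S \<in> carrier_mat n n"
    by (auto simp: FF_def GG_def DD_def)
  have "?A = ?A * (FF n * GG n)" using FG[OF n] by simp
  also have "\<dots> = (?A * FF n) * GG n" using carr by (subst assoc_mult_mat[of _ n n _ n _ n]) auto
  also have "\<dots> = FF n * DD n S * GG n" using AF[OF n] by simp
  finally have A: "?A = FF n * DD n S * GG n" .
  have sim: "similar_mat ?A (DD n S)"
    by (rule similar_matI[of _ _ "FF n" "GG n" n]) (use carr FG[OF n] GF[OF n] A in auto)
  have ut: "upper_triangular (DD n S)" by (auto simp: upper_triangular_def DD_def)
  have "char_poly ?A = char_poly (DD n S)" by (rule char_poly_similar[OF sim])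
  also have "\<dots> = (\<Prod>a\<leftarrow>diag_mat (DD n S). [:- a, 1:])"
    by (rule char_poly_upper_triangular[OF carr(3) ut])
  also have "diag_mat (DD n S) = map (lam n S) [0..<n]"
    by (auto simp: diag_mat_def DD_def)
  finally have cp: "char_poly ?A = (\<Prod>a\<leftarrow>map (lam n S) [0..<n]. [:- a, 1:])" .
  have "proots (char_poly ?A) = (\<Sum>p\<leftarrow>map (\<lambda>a. [:- a, 1:]) (map (lam n S) [0..<n]). proots p)"
    unfolding cp by (subst proots_prod_list[symmetric]) (auto simp: o_def)
  also have "\<dots> = mset (map (lam n S) [0..<n])"
    by (simp add: o_def sum_list_single)
  finally show ?thesis unfolding Spec_def .
qed

definition aN :: "nat \<Rightarrow> nat set \<Rightarrow> nat \<Rightarrow> nat" where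
  "aN n S j = (if \<exists>s\<in>S. int j mod int n = int s mod int n then 1 else 0)"

lemma aS_aN: "aS n S = (\<lambda>j. of_nat (aN n S j))"
  by (auto simp: aS_def aN_def)

lemma conv_of_nat: "of_nat (conv n x y t) = conv n (\<lambda>j. of_nat (x j)) (\<lambda>j. of_nat (y j)) t"
  by (simp add: conv_def)

lemma conv_of_nat': "(\<lambda>t. of_nat (conv n x y t)) = conv n (\<lambda>j. of_nat (x j)) (\<lambda>j. of_nat (y j))"
  by (rule ext) (rule conv_of_nat)

definition inv3 :: "nat \<Rightarrow> nat set \<Rightarrow> int \<times> int \<times> int" where
  "inv3 n S = (let a = (\<lambda>j. int (aN n S j)); b = conv n a a in (conv n a a 0, conv n b a 0, conv n b b 0))"

lemma aS_aI: "aS n S = (\<lambda>j. of_int (int (aN n S j)))"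
  by (auto simp: aS_def aN_def)

lemma conv_of_int: "of_int (conv n x y t) = conv n (\<lambda>j. of_int (x j)) (\<lambda>j. of_int (y j)) t"
  by (simp add: conv_def)

lemma conv_of_int': "(\<lambda>t. of_int (conv n x y t)) = conv n (\<lambda>j. of_int (x j)) (\<lambda>j. of_int (y j))"
  by (rule ext) (rule conv_of_int)

lemma msum_map: "(\<Sum>x\<in>#mset (map f xs). g x) = sum_list (map (\<lambda>k. g (f k)) xs)"
  by (induction xs) auto

lemma psum: assumes n: "n > 0"
  shows "(\<Sum>x\<in>#Spec (cayley_adj n S). x ^ m) = (\<Sum>k<n. lam n S k ^ m)"
  unfolding Spec_cayley[OF n] msum_map
  by (simp add: atLeast0LessThan[symmetric] sum_set_upt_conv_sum_list_nat[symmetric] del: mset_map)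

lemma Spec_inv: assumes n: "n > 0" and e: "Spec (cayley_adj n S1) = Spec (cayley_adj n S2)"
  shows "inv3 n S1 = inv3 n S2"
proof -
  have key: "(\<Sum>x\<in>#Spec (cayley_adj n S). x ^ 2) = of_nat n * of_int (fst (inv3 n S)) \<and>
     (\<Sum>x\<in>#Spec (cayley_adj n S). x ^ 3) = of_nat n * of_int (fst (snd (inv3 n S))) \<and>
     (\<Sum>x\<in>#Spec (cayley_adj n S). x ^ 4) = of_nat n * of_int (snd (snd (inv3 n S)))" for S
  proof -
    let ?a = "aS n S" and ?b = "conv n (aS n S) (aS n S)"
    have l2: "lam n S k ^ 2 = T n ?b k" for k
      unfolding lam_def power2_eq_square by (rule T_mult[OF n])
    have l3: "lam n S k ^ 3 = T n (conv n ?b ?a) k" for k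
      unfolding power3_eq_cube
    proof -
      have "lam n S k * lam n S k * lam n S k = T n ?b k * T n ?a k"
        using l2[of k] by (simp add: power2_eq_square lam_def)
      thus "lam n S k * lam n S k * lam n S k = T n (conv n ?b ?a) k" using T_mult[OF n] by simp
    qed
    have l4: "lam n S k ^ 4 = T n (conv n ?b ?b) k" for k
    proof -
      have "lam n S k ^ 4 = (lam n S k ^ 2) * (lam n S k ^ 2)" by (simp add: power_add[symmetric])
      thus ?thesis using l2 T_mult[OF n] by simp
    qed
    show ?thesis
      unfolding psum[OF n] l2 l3 l4 T_sum[OF n] inv3_def Let_def
      by (simp add: aS_aI conv_of_int conv_of_int')
  qed
  have "of_nat n * (of_int (fst (inv3 n S1)) :: complex) = of_nat n * of_int (fst (inv3 n S2))"
       "of_nat n * (of_int (fst (snd (inv3 n S1))) :: complex) = of_nat n * of_int (fst (snd (inv3 n S2)))"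
       "of_nat n * (of_int (snd (snd (inv3 n S1))) :: complex) = of_nat n * of_int (snd (snd (inv3 n S2)))"
    using key[of S1] key[of S2] e by metis+
  thus ?thesis using n by (auto simp: prod_eq_iff)
qed

definition gl :: "nat list" where
  "gl = [36,1,2,3,4,1,6,1,4,9,2,1,12,1,2,3,4,1,18,1,4,3,2,1,12,1,2,9,4,1,6,1,4,3,2,1]"

lemma gl_eq: "gl = map (\<lambda>j. gcd j 36) [0..<36]"
  unfolding gl_def by code_simp

lemma gl_nth: "j < 36 \<Longrightarrow> gl ! j = gcd j 36"
  unfolding gl_eq by simp

lemma length_gl[simp]: "length gl = 36" unfolding gl_eq by simp

definition aLst :: "nat list \<Rightarrow> int list" where
  "aLst L = map (\<lambda>g. if g \<in> set L then 1 else 0) gl"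

definition reflL :: "int list \<Rightarrow> int list" where "reflL xs = hd xs # rev (tl xs)"

definition rr :: "int list \<Rightarrow> int list" where "rr xs = last xs # butlast xs"

fun rots :: "nat \<Rightarrow> int list \<Rightarrow> int list list" where
  "rots 0 xs = []" | "rots (Suc k) xs = xs # rots k (rr xs)"

definition cv0 :: "int list \<Rightarrow> int list \<Rightarrow> int" where
  "cv0 x y = sum_list (map2 (*) x (reflL y))"

definition bL :: "int list \<Rightarrow> int list" where
  "bL a = map (\<lambda>r. sum_list (map2 (*) a r)) (rots 36 (reflL a))"

definition invL :: "nat list \<Rightarrow> int \<times> int \<times> int" where
  "invL L = (let a = aLst L; b = bL a in (cv0 a a, cv0 b a, cv0 b b))"

lemma sum_map2: "length xs = length ys \<Longrightarrow>
   sum_list (map2 (*) xs ys) = (\<Sum>j<length xs. xs ! j * ys ! (j::nat))" for xs ys :: "int list"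
proof -
  assume l: "length xs = length ys"
  have "map2 (*) xs ys = map (\<lambda>j. xs ! j * ys ! j) [0..<length xs]"
    using l by (intro nth_equalityI) auto
  thus ?thesis by (simp add: sum_set_upt_conv_sum_list_nat[symmetric] atLeast0LessThan)
qed

lemma aLst_len[simp]: "length (aLst L) = 36" by (simp add: aLst_def)
lemma aLst_nth: "j < 36 \<Longrightarrow> aLst L ! j = (if gcd j 36 \<in> set L then 1 else 0)"
  by (simp add: aLst_def gl_nth)

lemma reflL_len[simp]: "xs \<noteq> [] \<Longrightarrow> length (reflL xs) = length xs"
  by (cases xs) (auto simp: reflL_def)

lemma reflL_nth: assumes "xs \<noteq> []" "i < length xs"
  shows "reflL xs ! i = xs ! ((length xs - i) mod length xs)"
proof (cases xs)
  case Nil then show ?thesis using assms by simp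
next
  case (Cons x ys)
  show ?thesis
  proof (cases i)
    case 0 then show ?thesis using Cons by (simp add: reflL_def)
  next
    case (Suc m)
    then have m: "m < length ys" using assms Cons by simp
    have "reflL xs ! i = rev ys ! m" using Cons Suc by (simp add: reflL_def)
    also have "\<dots> = ys ! (length ys - Suc m)" using m by (simp add: rev_nth)
    also have "\<dots> = xs ! ((length xs - i) mod length xs)" using Cons Suc m by simp
    finally show ?thesis .
  qed
qed

lemma rr_rotate: assumes "xs \<noteq> []" shows "rr xs = rotate (length xs - 1) xs"
proof -
  have "rotate (length xs - 1) xs = drop (length xs - 1) xs @ take (length xs - 1) xs"
    using assms by (simp add: rotate_drop_take)
  also have "drop (length xs - 1) xs = [last xs]" using assms
    by (metis append_butlast_last_id append_eq_conv_conj length_butlast)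
  also have "take (length xs - 1) xs = butlast xs" by (simp add: butlast_conv_take)
  finally show ?thesis by (simp add: rr_def)
qed

lemma rr_len[simp]: "xs \<noteq> [] \<Longrightarrow> length (rr xs) = length xs" by (simp add: rr_def)

lemma rots_len[simp]: "length (rots k xs) = k" by (induction k arbitrary: xs) auto

lemma rots_nth: "xs \<noteq> [] \<Longrightarrow> t < k \<Longrightarrow> rots k xs ! t = rotate (t * (length xs - 1)) xs"
proof (induction k arbitrary: xs t)
  case 0 then show ?case by simp
next
  case (Suc k)
  show ?case
  proof (cases t)
    case 0 then show ?thesis by simp
  next
    case (Suc m)
    have ne: "rr xs \<noteq> []" by (simp add: rr_def)
    have "rots (Suc k) xs ! t = rots k (rr xs) ! m" using Suc by simp
    also have "\<dots> = rotate (m * (length xs - 1)) (rotate (length xs - 1) xs)"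
      using Suc.IH[OF ne, of m] Suc.prems Suc rr_rotate[OF Suc.prems(1)] by simp
    also have "\<dots> = rotate (m * (length xs - 1) + (length xs - 1)) xs" by (simp add: rotate_rotate)
    also have "m * (length xs - 1) + (length xs - 1) = t * (length xs - 1)" using Suc by simp
    finally show ?thesis .
  qed
qed

lemma modid: assumes j: "(j::nat) < 36" shows "(36 - (j + t * 35) mod 36) mod 36 = (t + 36 - j) mod 36"
proof -
  define r where "r = (j + t * 35) mod 36"
  define c where "c = t + 36 - j"
  have r36: "r < 36" unfolding r_def by simp
  have "(r + c) mod 36 = (j + t * 35 + c) mod 36" unfolding r_def by (rule mod_add_left_eq)
  also have "j + t * 35 + c = 36 * (t + 1)" unfolding c_def using j by simp
  finally have "36 dvd (r + c)" by (simp add: dvd_eq_mod_eq_0)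
  then obtain k where k: "r + c = 36 * k" by (auto simp: dvd_def)
  have k1: "k \<ge> 1" using k j unfolding c_def by (cases k) auto
  have "c = 36 * (k - 1) + (36 - r)" using k k1 r36 by (cases k) auto
  hence "c mod 36 = (36 - r) mod 36" by simp
  thus ?thesis unfolding r_def c_def by simp
qed

lemma modid': "(j::nat) < 36 \<Longrightarrow> (36 - (t * 35 + j) mod 36) mod 36 = (t + 36 - j) mod 36"
  using modid[of j t] by (simp add: add.commute)

lemma bL_nth: assumes "length a = 36" "t < 36"
  shows "bL a ! t = (\<Sum>j<36. a ! j * a ! ((t + 36 - j) mod 36))"
proof -
  have ne: "a \<noteq> []" using assms by auto
  have ne2: "reflL a \<noteq> []" by (simp add: reflL_def)
  have "rots 36 (reflL a) ! t = rotate (t * (length (reflL a) - 1)) (reflL a)"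
    by (rule rots_nth[OF ne2 assms(2)])
  hence "bL a ! t = sum_list (map2 (*) a (rotate (t * 35) (reflL a)))"
    using assms ne by (simp add: bL_def)
  also have "\<dots> = (\<Sum>j<36. a ! j * rotate (t * 35) (reflL a) ! j)"
    using assms ne by (simp add: sum_map2)
  also have "\<dots> = (\<Sum>j<36. a ! j * a ! ((t + 36 - j) mod 36))"
    using assms ne by (intro sum.cong refl) (simp add: nth_rotate reflL_nth modid')
  finally show ?thesis .
qed

lemma bL_len[simp]: "length (bL a) = 36" by (simp add: bL_def)

lemma cv0_conv: assumes "length x = 36" "length y = 36"
  shows "cv0 x y = conv 36 (\<lambda>j. x ! j) (\<lambda>j. y ! j) 0"
proof -
  have ne: "y \<noteq> []" using assms by auto
  have "cv0 x y = (\<Sum>j<36. x ! j * reflL y ! j)" using assms ne by (simp add: cv0_def sum_map2)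
  also have "\<dots> = conv 36 (\<lambda>j. x ! j) (\<lambda>j. y ! j) 0"
    unfolding conv_def using assms ne by (intro sum.cong refl) (simp add: reflL_nth)
  finally show ?thesis .
qed

lemma conv_cong: assumes "n > 0" "\<And>j. j < n \<Longrightarrow> x j = x' j" "\<And>j. j < n \<Longrightarrow> y j = y' j"
  shows "conv n x y t = conv n x' y' t"
  unfolding conv_def using assms by (intro sum.cong refl) simp

lemma aN_conn: assumes j: "j < n" and nD: "n \<notin> D"
  shows "aN n (conn_set n D) j = (if j \<noteq> 0 \<and> gcd j n \<in> D then 1 else 0)"
proof -
  have "(\<exists>s\<in>conn_set n D. int j mod int n = int s mod int n) \<longleftrightarrow> j \<noteq> 0 \<and> gcd j n \<in> D"
  proof
    assume "\<exists>s\<in>conn_set n D. int j mod int n = int s mod int n"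
    then obtain s where s: "s \<in> {1..n}" "gcd s n \<in> D" "int j mod int n = int s mod int n"
      by (auto simp: conn_set_def Gn_def)
    have jj: "int j mod int n = int j" using j by simp
    show "j \<noteq> 0 \<and> gcd j n \<in> D"
    proof (cases "s = n")
      case True then show ?thesis using s nD by simp
    next
      case False
      hence "s < n" using s by auto
      hence "int s mod int n = int s" by simp
      hence "j = s" using s(3) jj by simp
      thus ?thesis using s by auto
    qed
  next
    assume h: "j \<noteq> 0 \<and> gcd j n \<in> D"
    hence "j \<in> conn_set n D" using j by (auto simp: conn_set_def Gn_def)
    thus "\<exists>s\<in>conn_set n D. int j mod int n = int s mod int n" by blast
  qed
  thus ?thesis unfolding aN_def by simp
qed

lemma inv_link: assumes nL: "36 \<notin> set L"
  shows "inv3 36 (conn_set 36 (set L)) = invL L"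
proof -
  let ?a = "\<lambda>j. int (aN 36 (conn_set 36 (set L)) j)"
  let ?A = "\<lambda>j. aLst L ! j"
  let ?B = "\<lambda>t. bL (aLst L) ! t"
  have aA: "?a j = ?A j" if "j < 36" for j
    using that nL by (cases "j = 0") (simp_all add: aN_conn aLst_nth)
  have bB: "conv 36 ?a ?a t = ?B t" if "t < 36" for t
  proof -
    have "conv 36 ?a ?a t = conv 36 ?A ?A t" by (rule conv_cong) (simp_all add: aA)
    also have "\<dots> = ?B t" using that by (simp add: bL_nth conv_def)
    finally show ?thesis .
  qed
  have "inv3 36 (conn_set 36 (set L)) = (conv 36 ?A ?A 0, conv 36 ?B ?A 0, conv 36 ?B ?B 0)"
    unfolding inv3_def Let_def
    by (intro prod_eqI conjI) (simp_all, (rule conv_cong; simp add: aA bB)+)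
  also have "\<dots> = invL L"
    unfolding invL_def Let_def by (simp add: cv0_conv)
  finally show ?thesis .
qed

definition Ls :: "nat list list" where
  "Ls = [[12,1,2,3,4,6,9,18], [12,1,2,3,4,6,9], [12,1,2,3,4,6,18], [12,1,2,3,4,6], [12,1,2,3,4,9,18], [12,1,2,3,4,9], [12,1,2,3,4,18], [12,1,2,3,4], [12,1,2,3,6,9,18], [12,1,2,3,6,9], [12,1,2,3,6,18], [12,1,2,3,6], [12,1,2,3,9,18], [12,1,2,3,9], [12,1,2,3,18], [12,1,2,3], [12,1,2,4,6,9,18], [12,1,2,4,6,9], [12,1,2,4,6,18], [12,1,2,4,6], [12,1,2,4,9,18], [12,1,2,4,9], [12,1,2,4,18], [12,1,2,4], [12,1,2,6,9,18], [12,1,2,6,9], [12,1,2,6,18], [12,1,2,6], [12,1,2,9,18], [12,1,2,9], [12,1,2,18], [12,1,2], [12,1,3,4,6,9,18], [12,1,3,4,6,9], [12,1,3,4,6,18], [12,1,3,4,6], [12,1,3,4,9,18], [12,1,3,4,9], [12,1,3,4,18], [12,1,3,4], [12,1,3,6,9,18], [12,1,3,6,9], [12,1,3,6,18], [12,1,3,6], [12,1,3,9,18], [12,1,3,9], [12,1,3,18], [12,1,3], [12,1,4,6,9,18], [12,1,4,6,9], [12,1,4,6,18], [12,1,4,6], [12,1,4,9,18], [12,1,4,9], [12,1,4,18], [12,1,4], [12,1,6,9,18], [12,1,6,9], [12,1,6,18], [12,1,6], [12,1,9,18], [12,1,9], [12,1,18], [12,1], [12,2,3,4,6,9,18], [12,2,3,4,6,9],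 [12,2,3,4,6,18], [12,2,3,4,6], [12,2,3,4,9,18], [12,2,3,4,9], [12,2,3,4,18], [12,2,3,4], [12,2,3,6,9,18], [12,2,3,6,9], [12,2,3,6,18], [12,2,3,6], [12,2,3,9,18], [12,2,3,9], [12,2,3,18], [12,2,3], [12,2,4,6,9,18], [12,2,4,6,9], [12,2,4,6,18], [12,2,4,6], [12,2,4,9,18], [12,2,4,9], [12,2,4,18], [12,2,4], [12,2,6,9,18], [12,2,6,9], [12,2,6,18], [12,2,6], [12,2,9,18], [12,2,9], [12,2,18], [12,2], [12,3,4,6,9,18], [12,3,4,6,9], [12,3,4,6,18], [12,3,4,6], [12,3,4,9,18], [12,3,4,9], [12,3,4,18], [12,3,4], [12,3,6,9,18], [12,3,6,9], [12,3,6,18], [12,3,6], [12,3,9,18], [12,3,9], [12,3,18], [12,3], [12,4,6,9,18], [12,4,6,9], [12,4,6,18], [12,4,6], [12,4,9,18], [12,4,9], [12,4,18], [12,4], [12,6,9,18], [12,6,9], [12,6,18], [12,6], [12,9,18], [12,9], [12,18], [12]]"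

lemma Ls_eq: "map ((#) 12) (subseqs [1,2,3,4,6,9,18]) = Ls" unfolding Ls_def by simp

lemma inv_0: "invL [12,1,2,3,4,6,9,18] = (35, 1190, 41685)" by code_simp

lemma inv_1: "invL [12,1,2,3,4,6,9] = (34, 1088, 37128)" by code_simp

lemma inv_2: "invL [12,1,2,3,4,6,18] = (33, 992, 32961)" by code_simp

lemma inv_3: "invL [12,1,2,3,4,6] = (32, 896, 29184)" by code_simp

lemma inv_4: "invL [12,1,2,3,4,9,18] = (33, 992, 32959)" by code_simp

lemma inv_5: "invL [12,1,2,3,4,9] = (32, 902, 29166)" by code_simp

lemma inv_6: "invL [12,1,2,3,4,18] = (31, 818, 25699)" by code_simp

lemma inv_7: "invL [12,1,2,3,4] = (30, 734, 22590)" by code_simp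

lemma inv_8: "invL [12,1,2,3,6,9,18] = (29, 650, 19851)" by code_simp

lemma inv_9: "invL [12,1,2,3,6,9] = (28, 584, 17274)" by code_simp

lemma inv_10: "invL [12,1,2,3,6,18] = (27, 524, 14943)" by code_simp

lemma inv_11: "invL [12,1,2,3,6] = (26, 464, 12858)" by code_simp

lemma inv_12: "invL [12,1,2,3,9,18] = (27, 524, 15013)" by code_simp

lemma inv_13: "invL [12,1,2,3,9] = (26, 470, 13056)" by code_simp

lemma inv_14: "invL [12,1,2,3,18] = (25, 422, 10993)" by code_simp

lemma inv_15: "invL [12,1,2,3] = (24, 374, 9432)" by code_simp

lemma inv_16: "invL [12,1,2,4,6,9,18] = (31, 818, 25709)" by code_simp

lemma inv_17: "invL [12,1,2,4,6,9] = (30, 728, 22616)" by code_simp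

lemma inv_18: "invL [12,1,2,4,6,18] = (29, 668, 19833)" by code_simp

lemma inv_19: "invL [12,1,2,4,6] = (28, 584, 17328)" by code_simp

lemma inv_20: "invL [12,1,2,4,9,18] = (29, 656, 19791)" by code_simp

lemma inv_21: "invL [12,1,2,4,9] = (28, 578, 17318)" by code_simp

lemma inv_22: "invL [12,1,2,4,18] = (27, 506, 15139)" by code_simp

lemma inv_23: "invL [12,1,2,4] = (26, 434, 13254)" by code_simp

lemma inv_24: "invL [12,1,2,6,9,18] = (25, 422, 11075)" by code_simp

lemma inv_25: "invL [12,1,2,6,9] = (24, 368, 9386)" by code_simp

lemma inv_26: "invL [12,1,2,6,18] = (23, 344, 8151)" by code_simp

lemma inv_27: "invL [12,1,2,6] = (22, 296, 6762)" by code_simp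

lemma inv_28: "invL [12,1,2,9,18] = (23, 332, 7893)" by code_simp

lemma inv_29: "invL [12,1,2,9] = (22, 290, 6680)" by code_simp

lemma inv_30: "invL [12,1,2,18] = (21, 254, 5617)" by code_simp

lemma inv_31: "invL [12,1,2] = (20, 218, 4704)" by code_simp

lemma inv_32: "invL [12,1,3,4,6,9,18] = (29, 668, 19779)" by code_simp

lemma inv_33: "invL [12,1,3,4,6,9] = (28, 602, 17274)" by code_simp

lemma inv_34: "invL [12,1,3,4,6,18] = (27, 542, 14871)" by code_simp

lemma inv_35: "invL [12,1,3,4,6] = (26, 482, 12858)" by code_simp

lemma inv_36: "invL [12,1,3,4,9,18] = (27, 542, 15085)" by code_simp

lemma inv_37: "invL [12,1,3,4,9] = (26, 488, 13200)" by code_simp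

lemma inv_38: "invL [12,1,3,4,18] = (25, 440, 11065)" by code_simp

lemma inv_39: "invL [12,1,3,4] = (24, 392, 9576)" by code_simp

lemma inv_40: "invL [12,1,3,6,9,18] = (23, 290, 8637)" by code_simp

lemma inv_41: "invL [12,1,3,6,9] = (22, 224, 7608)" by code_simp

lemma inv_42: "invL [12,1,3,6,18] = (21, 236, 5961)" by code_simp

lemma inv_43: "invL [12,1,3,6] = (20, 176, 5136)" by code_simp

lemma inv_44: "invL [12,1,3,9,18] = (21, 164, 6823)" by code_simp

lemma inv_45: "invL [12,1,3,9] = (20, 110, 6270)" by code_simp

lemma inv_46: "invL [12,1,3,18] = (19, 134, 4459)" by code_simp

lemma inv_47: "invL [12,1,3] = (18, 86, 4014)" by code_simp

lemma inv_48: "invL [12,1,4,6,9,18] = (25, 440, 11003)" by code_simp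

lemma inv_49: "invL [12,1,4,6,9] = (24, 386, 9386)" by code_simp

lemma inv_50: "invL [12,1,4,6,18] = (23, 362, 8079)" by code_simp

lemma inv_51: "invL [12,1,4,6] = (22, 314, 6762)" by code_simp

lemma inv_52: "invL [12,1,4,9,18] = (23, 350, 7965)" by code_simp

lemma inv_53: "invL [12,1,4,9] = (22, 308, 6824)" by code_simp

lemma inv_54: "invL [12,1,4,18] = (21, 272, 5689)" by code_simp

lemma inv_55: "invL [12,1,4] = (20, 236, 4848)" by code_simp

lemma inv_56: "invL [12,1,6,9,18] = (19, 206, 4181)" by code_simp

lemma inv_57: "invL [12,1,6,9] = (18, 152, 3464)" by code_simp

lemma inv_58: "invL [12,1,6,18] = (17, 200, 3201)" by code_simp

lemma inv_59: "invL [12,1,6] = (16, 152, 2496)" by code_simp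

lemma inv_60: "invL [12,1,9,18] = (17, 116, 2871)" by code_simp

lemma inv_61: "invL [12,1,9] = (16, 74, 2486)" by code_simp

lemma inv_62: "invL [12,1,18] = (15, 110, 1963)" by code_simp

lemma inv_63: "invL [12,1] = (14, 74, 1590)" by code_simp

lemma inv_64: "invL [12,2,3,4,6,9,18] = (23, 362, 8349)" by code_simp

lemma inv_65: "invL [12,2,3,4,6,9] = (22, 296, 7032)" by code_simp

lemma inv_66: "invL [12,2,3,4,6,18] = (21, 308, 6249)" by code_simp

lemma inv_67: "invL [12,2,3,4,6] = (20, 248, 5136)" by code_simp

lemma inv_68: "invL [12,2,3,4,9,18] = (21, 236, 5959)" by code_simp

lemma inv_69: "invL [12,2,3,4,9] = (20, 182, 5118)" by code_simp

lemma inv_70: "invL [12,2,3,4,18] = (19, 206, 4171)" by code_simp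

lemma inv_71: "invL [12,2,3,4] = (18, 158, 3438)" by code_simp

lemma inv_72: "invL [12,2,3,6,9,18] = (17, 146, 2715)" by code_simp

lemma inv_73: "invL [12,2,3,6,9] = (16, 116, 2082)" by code_simp

lemma inv_74: "invL [12,2,3,6,18] = (15, 92, 1695)" by code_simp

lemma inv_75: "invL [12,2,3,6] = (14, 68, 1266)" by code_simp

lemma inv_76: "invL [12,2,3,9,18] = (15, 92, 1621)" by code_simp

lemma inv_77: "invL [12,2,3,9] = (14, 74, 1320)" by code_simp

lemma inv_78: "invL [12,2,3,18] = (13, 62, 913)" by code_simp

lemma inv_79: "invL [12,2,3] = (12, 50, 720)" by code_simp

lemma inv_80: "invL [12,2,4,6,9,18] = (19, 278, 5045)" by code_simp

lemma inv_81: "invL [12,2,4,6,9] = (18, 224, 4040)" by code_simp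

lemma inv_82: "invL [12,2,4,6,18] = (17, 272, 4641)" by code_simp

lemma inv_83: "invL [12,2,4,6] = (16, 224, 3648)" by code_simp

lemma inv_84: "invL [12,2,4,9,18] = (17, 188, 3159)" by code_simp

lemma inv_85: "invL [12,2,4,9] = (16, 146, 2486)" by code_simp

lemma inv_86: "invL [12,2,4,18] = (15, 182, 2827)" by code_simp

lemma inv_87: "invL [12,2,4] = (14, 146, 2166)" by code_simp

lemma inv_88: "invL [12,2,6,9,18] = (13, 62, 1139)" by code_simp

lemma inv_89: "invL [12,2,6,9] = (12, 44, 818)" by code_simp

lemma inv_90: "invL [12,2,6,18] = (11, 56, 951)" by code_simp

lemma inv_91: "invL [12,2,6] = (10, 44, 642)" by code_simp

lemma inv_92: "invL [12,2,9,18] = (11, 44, 549)" by code_simp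

lemma inv_93: "invL [12,2,9] = (10, 38, 416)" by code_simp

lemma inv_94: "invL [12,2,18] = (9, 38, 433)" by code_simp

lemma inv_95: "invL [12,2] = (8, 38, 312)" by code_simp

lemma inv_96: "invL [12,3,4,6,9,18] = (17, 164, 2643)" by code_simp

lemma inv_97: "invL [12,3,4,6,9] = (16, 134, 2082)" by code_simp

lemma inv_98: "invL [12,3,4,6,18] = (15, 110, 1623)" by code_simp

lemma inv_99: "invL [12,3,4,6] = (14, 86, 1266)" by code_simp

lemma inv_100: "invL [12,3,4,9,18] = (15, 110, 1693)" by code_simp

lemma inv_101: "invL [12,3,4,9] = (14, 92, 1464)" by code_simp

lemma inv_102: "invL [12,3,4,18] = (13, 80, 985)" by code_simp

lemma inv_103: "invL [12,3,4] = (12, 68, 864)" by code_simp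

lemma inv_104: "invL [12,3,6,9,18] = (11, 110, 1221)" by code_simp

lemma inv_105: "invL [12,3,6,9] = (10, 80, 840)" by code_simp

lemma inv_106: "invL [12,3,6,18] = (9, 56, 561)" by code_simp

lemma inv_107: "invL [12,3,6] = (8, 32, 384)" by code_simp

lemma inv_108: "invL [12,3,9,18] = (9, 56, 559)" by code_simp

lemma inv_109: "invL [12,3,9] = (8, 38, 366)" by code_simp

lemma inv_110: "invL [12,3,18] = (7, 26, 211)" by code_simp

lemma inv_111: "invL [12,3] = (6, 14, 126)" by code_simp

lemma inv_112: "invL [12,4,6,9,18] = (13, 80, 1067)" by code_simp

lemma inv_113: "invL [12,4,6,9] = (12, 62, 818)" by code_simp

lemma inv_114: "invL [12,4,6,18] = (11, 74, 879)" by code_simp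

lemma inv_115: "invL [12,4,6] = (10, 62, 642)" by code_simp

lemma inv_116: "invL [12,4,9,18] = (11, 62, 621)" by code_simp

lemma inv_117: "invL [12,4,9] = (10, 56, 560)" by code_simp

lemma inv_118: "invL [12,4,18] = (9, 56, 505)" by code_simp

lemma inv_119: "invL [12,4] = (8, 56, 456)" by code_simp

lemma inv_120: "invL [12,6,9,18] = (7, 26, 221)" by code_simp

lemma inv_121: "invL [12,6,9] = (6, 8, 152)" by code_simp

lemma inv_122: "invL [12,6,18] = (5, 20, 105)" by code_simp

lemma inv_123: "invL [12,6] = (4, 8, 48)" by code_simp

lemma inv_124: "invL [12,9,18] = (5, 8, 63)" by code_simp

lemma inv_125: "invL [12,9] = (4, 2, 38)" by code_simp

lemma inv_126: "invL [12,18] = (3, 2, 19)" by code_simp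

lemma inv_127: "invL [12] = (2, 2, 6)" by code_simp

lemma map_invL: "map invL Ls = [(35, 1190, 41685), (34, 1088, 37128), (33, 992, 32961), (32, 896, 29184), (33, 992, 32959), (32, 902, 29166), (31, 818, 25699), (30, 734, 22590), (29, 650, 19851), (28, 584, 17274), (27, 524, 14943), (26, 464, 12858), (27, 524, 15013), (26, 470, 13056), (25, 422, 10993), (24, 374, 9432), (31, 818, 25709), (30, 728, 22616), (29, 668, 19833), (28, 584, 17328), (29, 656, 19791), (28, 578, 17318), (27, 506, 15139), (26, 434, 13254), (25, 422, 11075), (24, 368, 9386), (23, 344, 8151), (22, 296, 6762), (23, 332, 7893), (22, 290, 6680), (21, 254, 5617), (20, 218, 4704), (29, 668, 19779), (28, 602, 17274), (27, 542, 14871), (26, 482, 12858), (27, 542, 15085), (26, 488, 13200), (25, 440, 11065), (24, 392, 9576), (23, 290, 8637), (22, 224, 7608), (21, 236, 5961), (20, 176, 5136), (21, 164, 6823), (20, 110, 6270), (19, 134, 4459), (18, 86, 4014), (25, 440, 11003), (24, 386, 9386), (23, 362, 8079), (22, 314, 6762), (23, 350, 7965), (22, 308, 6824), (21, 272, 5689), (20, 236, 4848), (19, 206, 4181), (18, 152, 3464), (17, 200, 3201), (16, 152, 2496), (17, 116, 2871), (16, 74, 2486), (15, 110, 1963), (14, 74, 1590), (23, 362, 8349), (22, 296, 7032), (21, 308, 6249), (20, 248, 5136), (21, 236, 5959), (20, 182, 5118), (19, 206, 4171), (18, 158, 3438), (17, 146, 2715), (16, 116, 2082), (15, 92, 1695),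 (14, 68, 1266), (15, 92, 1621), (14, 74, 1320), (13, 62, 913), (12, 50, 720), (19, 278, 5045), (18, 224, 4040), (17, 272, 4641), (16, 224, 3648), (17, 188, 3159), (16, 146, 2486), (15, 182, 2827), (14, 146, 2166), (13, 62, 1139), (12, 44, 818), (11, 56, 951), (10, 44, 642), (11, 44, 549), (10, 38, 416), (9, 38, 433), (8, 38, 312), (17, 164, 2643), (16, 134, 2082), (15, 110, 1623), (14, 86, 1266), (15, 110, 1693), (14, 92, 1464), (13, 80, 985), (12, 68, 864), (11, 110, 1221), (10, 80, 840), (9, 56, 561), (8, 32, 384), (9, 56, 559), (8, 38, 366), (7, 26, 211), (6, 14, 126), (13, 80, 1067), (12, 62, 818), (11, 74, 879), (10, 62, 642), (11, 62, 621), (10, 56, 560), (9, 56, 505), (8, 56, 456), (7, 26, 221), (6, 8, 152), (5, 20, 105), (4, 8, 48), (5, 8, 63), (4, 2, 38), (3, 2, 19), (2, 2, 6)]"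
  unfolding Ls_def list.map inv_0 inv_1 inv_2 inv_3 inv_4 inv_5 inv_6 inv_7 inv_8 inv_9 inv_10 inv_11 inv_12 inv_13 inv_14 inv_15 inv_16 inv_17 inv_18 inv_19 inv_20 inv_21 inv_22 inv_23 inv_24 inv_25 inv_26 inv_27 inv_28 inv_29 inv_30 inv_31 inv_32 inv_33 inv_34 inv_35 inv_36 inv_37 inv_38 inv_39 inv_40 inv_41 inv_42 inv_43 inv_44 inv_45 inv_46 inv_47 inv_48 inv_49 inv_50 inv_51 inv_52 inv_53 inv_54 inv_55 inv_56 inv_57 inv_58 inv_59 inv_60 inv_61 inv_62 inv_63 inv_64 inv_65 inv_66 inv_67 inv_68 inv_69 inv_70 inv_71 inv_72 inv_73 inv_74 inv_75 inv_76 inv_77 inv_78 inv_79 inv_80 inv_81 inv_82 inv_83 inv_84 inv_85 inv_86 inv_87 inv_88 inv_89 inv_90 inv_91 inv_92 inv_93 inv_94 inv_95 inv_96 inv_97 inv_98 inv_99 inv_100 inv_101 inv_102 inv_103 inv_104 inv_105 inv_106 inv_107 inv_108 inv_109 inv_110 inv_111 inv_112 inv_113 inv_114 inv_115 inv_116 inv_117 inv_118 inv_119 inv_120 inv_121 inv_122 inv_123 inv_124 inv_125 inv_126 inv_127 ..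

lemma distinct_invL: "distinct (map invL Ls)" unfolding map_invL by simp

lemma div36: "d \<in> divisors_of 36 \<Longrightarrow> d \<in> {1,2,3,4,6,9,12,18,36}"
proof -
  assume "d \<in> divisors_of 36"
  hence d: "0 < d" "d dvd (36::nat)" by (auto simp: divisors_of_def)
  hence "d \<le> 36" by (simp add: dvd_imp_le)
  hence "d \<in> set (filter (\<lambda>d. d dvd (36::nat)) [1..<37])" using d by auto
  also have "filter (\<lambda>d. d dvd (36::nat)) [1..<37] = [1,2,3,4,6,9,12,18,36]" by code_simp
  finally show ?thesis by simp
qed

theorem lemma3p23:
  fixes D1 D2 :: "nat set"
  assumes "D1 \<subseteq> divisors_of 36 - {36}"
    and "D2 \<subseteq> divisors_of 36 - {36}"
    and "12 \<in> D1 \<inter> D2"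
    and "Spec (ICG_adj 36 D1) = Spec (ICG_adj 36 D2)"
  shows "D1 = D2"
proof -
  have rep: "\<exists>L\<in>set (subseqs [1,2,3,4,6,9,18]). D = set (12 # L)"
    if "D \<subseteq> divisors_of 36 - {36}" "12 \<in> D" for D
  proof -
    have "D - {12} \<subseteq> set [1,2,3,4,6,9,18::nat]" using that div36 by auto
    from subset_subseqs[OF this] obtain L where "L \<in> set (subseqs [1,2,3,4,6,9,18])" "set L = D - {12}"
      by blast
    thus ?thesis using that by (intro bexI[of _ L]) auto
  qed
  obtain L1 where L1: "L1 \<in> set (subseqs [1,2,3,4,6,9,18])" "D1 = set (12 # L1)"
    using rep[OF assms(1)] assms(3) by blast
  obtain L2 where L2: "L2 \<in> set (subseqs [1,2,3,4,6,9,18])" "D2 = set (12 # L2)"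
    using rep[OF assms(2)] assms(3) by blast
  have n1: "36 \<notin> set (12 # L1)" and n2: "36 \<notin> set (12 # L2)"
    using assms(1,2) unfolding L1(2)[symmetric] L2(2)[symmetric] by blast+
  have "inv3 36 (conn_set 36 D1) = inv3 36 (conn_set 36 D2)"
    by (rule Spec_inv) (use assms(4) in \<open>simp_all add: ICG_adj_def\<close>)
  hence e: "invL (12 # L1) = invL (12 # L2)" using inv_link[OF n1] inv_link[OF n2] L1 L2 by simp
  have m: "12 # L1 \<in> set Ls" "12 # L2 \<in> set Ls"
    unfolding Ls_eq[symmetric] set_map using L1(1) L2(1) by blast+
  have "inj_on invL (set Ls)" using distinct_invL by (simp add: distinct_map)
  hence "12 # L1 = 12 # L2" using e m by (auto dest: inj_onD)
  thus ?thesis using L1 L2 by simp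
qed

end
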